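(* Let $m\geq 0$ be an integer. Let the premiums $\{X_n, n\geq 1\}$ and the claims $\{Y_n, n\geq 1\}$ be sequences of nonnegative, identically distributed, $m$-dependent random variables with finite expectations, and let the rates of interest $\{I_n, n\geq 1\}$ be a sequence of i.i.d. nonnegative random variables with finite expectations. Suppose that the sequences $\{X_n\}$, $\{Y_n\}$, $\{I_n\}$ are mutually independent. For $u\geq 0$ define the surplus process by $U_0=u$ and $$U_n=U_{n-1}(1+I_n)+X_n-Y_n,\quad n\geq 1,$$ and the ultimate ruin probability $\Psi(u)=\mathbb{P}\big(\bigcup_{n=1}^\infty \{U_n<0\}\big)$. If there exists a positive real number $R$ satisfying $$\mathbb{E}\Big(e^{R\left(Y_1-X_1\right)}\Big)\leq 1,$$ then $$\Psi(u)\leq (m+1)e^{-R\frac{u}{m+1}}\quad\text{for all } u>\frac{(m+1)\ln(m+1)}{R}.$$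
   Context: A sequence of random variables $\{X_n, n\geq 1\}$ is called $m$-dependent (for a fixed nonnegative integer $m$) if the $\sigma$-algebras $\sigma\{X_1,\dots,X_n\}$ and $\sigma\{X_{n+k},X_{n+k+1},\dots\}$ are independent for all $k\geq m+1$ and all $n\geq 1$. In particular, $0$-dependence is independence. *)

theory Defs
  imports "HOL-Probability.Probability"
begin

definition gen_sigma :: "'a measure \<Rightarrow> (nat \<Rightarrow> 'a \<Rightarrow> real) \<Rightarrow> nat set \<Rightarrow> 'a set set" where
  "gen_sigma M X J = sigma_sets (space M) (\<Union>i\<in>J. {X i -` B \<inter> space M | B. B \<in> sets borel})"

definition (in prob_space) m_dependent :: "nat \<Rightarrow> (nat \<Rightarrow> 'a \<Rightarrow> real) \<Rightarrow> bool" where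
  "m_dependent m X \<longleftrightarrow> (\<forall>n\<ge>1. \<forall>k\<ge>m+1.
      indep_set (gen_sigma M X {1..n}) (gen_sigma M X {n+k..}))"

fun surplus :: "real \<Rightarrow> (nat \<Rightarrow> 'a \<Rightarrow> real) \<Rightarrow> (nat \<Rightarrow> 'a \<Rightarrow> real) \<Rightarrow> (nat \<Rightarrow> 'a \<Rightarrow> real)
    \<Rightarrow> nat \<Rightarrow> 'a \<Rightarrow> real" where
  "surplus u X Y I 0 \<omega> = u"
| "surplus u X Y I (Suc n) \<omega> = surplus u X Y I n \<omega> * (1 + I (Suc n) \<omega>) + X (Suc n) \<omega> - Y (Suc n) \<omega>"

definition (in prob_space) ruin_prob :: "(nat \<Rightarrow> 'a \<Rightarrow> real) \<Rightarrow> (nat \<Rightarrow> 'a \<Rightarrow> real)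
    \<Rightarrow> (nat \<Rightarrow> 'a \<Rightarrow> real) \<Rightarrow> real \<Rightarrow> real" where
  "ruin_prob X Y I u = prob (\<Union>n\<in>{1..}. {\<omega> \<in> space M. surplus u X Y I n \<omega> < 0})"

end

theory Submission
  imports Defs
begin

lemma meas_sub:
  assumes "G \<subseteq> Pow (space M)"
    and "\<And>A. A \<in> sets borel \<Longrightarrow> f -` A \<inter> space M \<in> sigma_sets (space M) G"
  shows "f \<in> borel_measurable (sigma (space M) G)"
  by (rule measurableI) (auto simp: assms space_measure_of_conv sets_measure_of_conv)

fun stopped :: "real \<Rightarrow> (nat \<Rightarrow> 'a \<Rightarrow> real) \<Rightarrow> nat \<Rightarrow> 'a \<Rightarrow> real" where
  "stopped a W 0 \<omega> = 0"
| "stopped a W (Suc k) \<omega> = (if a < stopped a W k \<omega> then stopped a W k \<omega> else stopped a W k \<omega> + W k \<omega>)"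

lemma stopped_ge:
  "(\<exists>J\<le>k. a < (\<Sum>j<J. W j \<omega>)) \<Longrightarrow> a < stopped a W k \<omega>"
proof (induction k)
  case 0 then show ?case by auto
next
  case (Suc k)
  show ?case
  proof (cases "a < stopped a W k \<omega>")
    case True then show ?thesis by simp
  next
    case False
    have eq: "stopped a W k \<omega> = (\<Sum>j<k. W j \<omega>)"
    proof -
      have "\<forall>k'\<le>k. \<not> a < stopped a W k' \<omega>"
      proof (intro allI impI)
        fix k' assume "k' \<le> k"
        then show "\<not> a < stopped a W k' \<omega>"
        proof (induction rule: inc_induct)
          case base then show ?case using False by simp
        next
          case (step q) then show ?case by (auto split: if_splits)
        qed
      qed
      then show ?thesis
        by (induction k) auto
    qed
    from Suc.prems obtain J where J: "J \<le> Suc k" "a < (\<Sum>j<J. W j \<omega>)" by auto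
    show ?thesis
    proof (cases "J = Suc k")
      case True then show ?thesis using J False eq by simp
    next
      case f2: False
      then have "J \<le> k" using J by simp
      then show ?thesis using Suc.IH J False by auto
    qed
  qed
qed

lemma stopped_meas:
  assumes "\<And>j. j < k \<Longrightarrow> W j \<in> borel_measurable N"
  shows "i \<le> k \<Longrightarrow> stopped a W i \<in> borel_measurable N"
proof (induction i)
  case 0 then show ?case by simp
next
  case (Suc i)
  then have [measurable]: "stopped a W i \<in> borel_measurable N" "W i \<in> borel_measurable N"
    using assms by auto
  show ?case by simp
qed

context prob_space begin

lemma indep_var_nn_prod:
  fixes A B :: "'a \<Rightarrow> real" and f g :: "real \<Rightarrow> ennreal"
  assumes ind: "indep_var borel A borel B"
    and f[measurable]: "f \<in> borel_measurable borel" and g[measurable]: "g \<in> borel_measurable borel"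
  shows "(\<integral>\<^sup>+\<omega>. f (A \<omega>) * g (B \<omega>) \<partial>M) = (\<integral>\<^sup>+\<omega>. f (A \<omega>) \<partial>M) * (\<integral>\<^sup>+\<omega>. g (B \<omega>) \<partial>M)"
proof -
  have "indep_var borel (f \<circ> A) borel (g \<circ> B)"
    by (rule indep_var_compose[OF ind f g])
  then have i2: "indep_vars (\<lambda>_. borel) (case_bool (f \<circ> A) (g \<circ> B)) UNIV"
  proof -
    have **: "(\<lambda>_. borel) = (case_bool borel borel :: bool \<Rightarrow> ennreal measure)"
      by (rule ext) (simp split: bool.split)
    show ?thesis using \<open>indep_var borel (f \<circ> A) borel (g \<circ> B)\<close>
      unfolding indep_var_def ** .
  qed
  have "(\<integral>\<^sup>+\<omega>. (\<Prod>i\<in>UNIV. case_bool (f \<circ> A) (g \<circ> B) i \<omega>) \<partial>M) =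
        (\<Prod>i\<in>UNIV. \<integral>\<^sup>+\<omega>. case_bool (f \<circ> A) (g \<circ> B) i \<omega> \<partial>M)"
    by (rule indep_vars_nn_integral) (use i2 in auto)
  then show ?thesis by (simp add: UNIV_bool mult.commute comp_def)
qed

lemma gen_sigma_Pow: "gen_sigma M W J \<subseteq> Pow (space M)"
proof -
  have "(\<Union>i\<in>J. {W i -` B \<inter> space M | B. B \<in> sets borel}) \<subseteq> Pow (space M)" by auto
  then show ?thesis unfolding gen_sigma_def using sigma_sets_into_sp by blast
qed

lemma gen_sigma_idem: "sigma_sets (space M) (gen_sigma M W J) = gen_sigma M W J"
  unfolding gen_sigma_def by (rule sigma_sets_sigma_sets_eq) auto

lemma gen_sigma_meas:
  assumes "i \<in> J"
  shows "W i \<in> borel_measurable (sigma (space M) (gen_sigma M W J))"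
proof (rule meas_sub[OF gen_sigma_Pow])
  fix A :: "real set" assume "A \<in> sets borel"
  then have "W i -` A \<inter> space M \<in> gen_sigma M W J"
    unfolding gen_sigma_def using assms by (intro sigma_sets.Basic) blast
  then show "W i -` A \<inter> space M \<in> sigma_sets (space M) (gen_sigma M W J)"
    by (rule sigma_sets.Basic)
qed

lemma gen_sigma_events:
  assumes "\<And>i. i \<in> J \<Longrightarrow> W i \<in> borel_measurable M"
  shows "gen_sigma M W J \<subseteq> events"
  unfolding gen_sigma_def
  by (rule sets.sigma_sets_subset) (use assms measurable_sets in blast)

lemma indep_var_from_sets:
  fixes A B :: "'a \<Rightarrow> real"
  assumes ind: "indep_set (sigma_sets (space M) F) (sigma_sets (space M) G)"
    and Am: "A \<in> borel_measurable M" and Bm: "B \<in> borel_measurable M"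
    and FP: "F \<subseteq> Pow (space M)" and GP: "G \<subseteq> Pow (space M)"
    and A: "A \<in> borel_measurable (sigma (space M) F)"
    and B: "B \<in> borel_measurable (sigma (space M) G)"
  shows "indep_var borel A borel B"
  unfolding indep_var_eq
proof (intro conjI)
  show "random_variable borel A" "random_variable borel B" using Am Bm by auto
  have sA: "sigma_sets (space M) {A -` S \<inter> space M |S. S \<in> sets borel} \<subseteq> sigma_sets (space M) F"
  proof (rule sigma_sets_mono, safe)
    fix S :: "real set" assume "S \<in> sets borel"
    then have "A -` S \<inter> space (sigma (space M) F) \<in> sets (sigma (space M) F)"
      using A measurable_sets by blast
    then show "A -` S \<inter> space M \<in> sigma_sets (space M) F"
      using FP by (simp add: space_measure_of_conv sets_measure_of_conv)
  qed
  have sB: "sigma_sets (space M) {B -` S \<inter> space M |S. S \<in> sets borel} \<subseteq> sigma_sets (space M) G"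
  proof (rule sigma_sets_mono, safe)
    fix S :: "real set" assume "S \<in> sets borel"
    then have "B -` S \<inter> space (sigma (space M) G) \<in> sets (sigma (space M) G)"
      using B measurable_sets by blast
    then show "B -` S \<inter> space M \<in> sigma_sets (space M) G"
      using GP by (simp add: space_measure_of_conv sets_measure_of_conv)
  qed
  show "indep_set (sigma_sets (space M) {A -` S \<inter> space M |S. S \<in> sets borel})
     (sigma_sets (space M) {B -` S \<inter> space M |S. S \<in> sets borel})"
    using ind unfolding indep_set_def
    by (rule indep_sets_mono_sets) (use sA sB in \<open>auto split: bool.split\<close>)
qed

lemma maximal:
  fixes W :: "nat \<Rightarrow> 'a \<Rightarrow> real" and R a :: real
  assumes Wm[measurable]: "\<And>k. W k \<in> borel_measurable M"
    and ind: "\<And>k. indep_set (gen_sigma M W {..<k}) (gen_sigma M W {k})"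
    and lund: "\<And>k. (\<integral>\<^sup>+\<omega>. ennreal (exp (R * W k \<omega>)) \<partial>M) \<le> 1"
    and R: "R \<ge> 0"
  shows "prob {\<omega>\<in>space M. \<exists>J. a < (\<Sum>j<J. W j \<omega>)} \<le> exp (-R*a)"
proof -
  define T where "T k = stopped a W k" for k
  have Tm[measurable]: "T k \<in> borel_measurable M" for k
    unfolding T_def by (rule stopped_meas[of k]) auto
  have Tind: "indep_var borel (T k) borel (W k)" for k
  proof (rule indep_var_from_sets[where F="gen_sigma M W {..<k}" and G="gen_sigma M W {k}"])
    show "indep_set (sigma_sets (space M) (gen_sigma M W {..<k})) (sigma_sets (space M) (gen_sigma M W {k}))"
      using ind[of k] by (simp add: gen_sigma_idem)
    show "T k \<in> borel_measurable (sigma (space M) (gen_sigma M W {..<k}))"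
      unfolding T_def by (rule stopped_meas[of k]) (auto intro: gen_sigma_meas)
    show "W k \<in> borel_measurable (sigma (space M) (gen_sigma M W {k}))"
      by (rule gen_sigma_meas) auto
  qed (auto simp: gen_sigma_Pow)
  have int: "(\<integral>\<^sup>+\<omega>. ennreal (exp (R * T k \<omega>)) \<partial>M) \<le> 1" for k
  proof (induction k)
    case 0 then show ?case by (simp add: T_def emeasure_space_1)
  next
    case (Suc k)
    define f1 where "f1 t = ennreal (if a < t then exp (R * t) else 0)" for t
    define f2 where "f2 t = ennreal (if a < t then 0 else exp (R * t))" for t
    define g where "g t = ennreal (exp (R * t))" for t
    have [measurable]: "f1 \<in> borel_measurable borel" "f2 \<in> borel_measurable borel" "g \<in> borel_measurable borel"
      unfolding f1_def f2_def g_def by measurable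
    have eq: "ennreal (exp (R * T (Suc k) \<omega>)) = f1 (T k \<omega>) + f2 (T k \<omega>) * g (W k \<omega>)" for \<omega>
      by (simp add: T_def f1_def f2_def g_def distrib_left exp_add ennreal_mult'')
    have "(\<integral>\<^sup>+\<omega>. ennreal (exp (R * T (Suc k) \<omega>)) \<partial>M)
        = (\<integral>\<^sup>+\<omega>. f1 (T k \<omega>) \<partial>M) + (\<integral>\<^sup>+\<omega>. f2 (T k \<omega>) * g (W k \<omega>) \<partial>M)"
      unfolding eq by (rule nn_integral_add) auto
    also have "(\<integral>\<^sup>+\<omega>. f2 (T k \<omega>) * g (W k \<omega>) \<partial>M) = (\<integral>\<^sup>+\<omega>. f2 (T k \<omega>) \<partial>M) * (\<integral>\<^sup>+\<omega>. g (W k \<omega>) \<partial>M)"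
      by (rule indep_var_nn_prod[OF Tind]) auto
    also have "\<dots> \<le> (\<integral>\<^sup>+\<omega>. f2 (T k \<omega>) \<partial>M) * 1"
      by (rule mult_left_mono) (use lund[of k] in \<open>auto simp: g_def\<close>)
    also have "(\<integral>\<^sup>+\<omega>. f1 (T k \<omega>) \<partial>M) + (\<integral>\<^sup>+\<omega>. f2 (T k \<omega>) \<partial>M) * 1
        = (\<integral>\<^sup>+\<omega>. f1 (T k \<omega>) + f2 (T k \<omega>) \<partial>M)"
      by (simp add: nn_integral_add)
    also have "\<dots> = (\<integral>\<^sup>+\<omega>. ennreal (exp (R * T k \<omega>)) \<partial>M)"
      by (rule nn_integral_cong) (simp add: f1_def f2_def)
    finally show ?case using Suc.IH by (simp add: add_left_mono order_trans)
  qed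
  have markov: "prob {\<omega>\<in>space M. a < T k \<omega>} \<le> exp (-R*a)" for k
  proof -
    have "(\<integral>\<^sup>+\<omega>. ennreal (exp (R * a)) * indicator {\<omega>\<in>space M. a < T k \<omega>} \<omega> \<partial>M)
          \<le> (\<integral>\<^sup>+\<omega>. ennreal (exp (R * T k \<omega>)) \<partial>M)"
    proof (intro nn_integral_mono)
      fix \<omega> assume "\<omega> \<in> space M"
      show "ennreal (exp (R * a)) * indicator {\<omega> \<in> space M. a < T k \<omega>} \<omega> \<le> ennreal (exp (R * T k \<omega>))"
      proof (cases "a < T k \<omega>")
        case True
        then have "R * a \<le> R * T k \<omega>" using R by (intro mult_left_mono) auto
        then show ?thesis using True \<open>\<omega> \<in> space M\<close> by (simp add: indicator_def)
      qed (simp add: indicator_def)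
    qed
    also have "\<dots> \<le> 1" by (rule int)
    finally have "ennreal (exp (R * a)) * emeasure M {\<omega>\<in>space M. a < T k \<omega>} \<le> 1"
      by (simp add: nn_integral_cmult_indicator)
    then have "exp (R * a) * prob {\<omega>\<in>space M. a < T k \<omega>} \<le> 1"
      by (simp add: emeasure_eq_measure ennreal_mult''[symmetric])
    then show ?thesis
      by (simp add: exp_minus field_simps)
  qed
  define B where "B k = {\<omega>\<in>space M. \<exists>J\<le>k. a < (\<Sum>j<J. W j \<omega>)}" for k
  have Bm: "B k \<in> events" for k
  proof -
    have "B k = (\<Union>J\<in>{..k}. {\<omega>\<in>space M. a < (\<Sum>j<J. W j \<omega>)})" by (auto simp: B_def)
    also have "\<dots> \<in> events" by measurable
    finally show ?thesis .
  qed
  have Bb: "prob (B k) \<le> exp (-R*a)" for k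
  proof -
    have "B k \<subseteq> {\<omega>\<in>space M. a < T k \<omega>}"
    proof
      fix \<omega> assume "\<omega> \<in> B k"
      then show "\<omega> \<in> {\<omega>\<in>space M. a < T k \<omega>}"
        unfolding B_def T_def using stopped_ge[of k a W \<omega>] by simp
    qed
    then have "prob (B k) \<le> prob {\<omega>\<in>space M. a < T k \<omega>}"
      by (intro finite_measure_mono) auto
    then show ?thesis using markov[of k] by linarith
  qed
  have inc: "incseq B"
  proof (rule incseq_SucI)
    fix k show "B k \<subseteq> B (Suc k)" unfolding B_def using le_SucI by blast
  qed
  have "(\<lambda>k. prob (B k)) \<longlonglongrightarrow> prob (\<Union>k. B k)"
    by (rule finite_Lim_measure_incseq) (use Bm inc in auto)
  then have "prob (\<Union>k. B k) \<le> exp (-R*a)"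
    by (rule LIMSEQ_le_const2) (use Bb in auto)
  moreover have "(\<Union>k. B k) = {\<omega>\<in>space M. \<exists>J. a < (\<Sum>j<J. W j \<omega>)}"
    unfolding B_def by auto
  ultimately show ?thesis by simp
qed

end


lemma surplus_bound:
  assumes I: "\<And>k. k \<ge> 1 \<Longrightarrow> I k \<omega> \<ge> 0"
  shows "(\<forall>j\<le>n. 0 \<le> u + (\<Sum>k\<in>{1..j}. X k \<omega> - Y k \<omega>)) \<Longrightarrow>
         u + (\<Sum>k\<in>{1..n}. X k \<omega> - Y k \<omega>) \<le> surplus u X Y I n \<omega>"
proof (induction n)
  case 0 then show ?case by simp
next
  case (Suc n)
  then have ih: "u + (\<Sum>k\<in>{1..n}. X k \<omega> - Y k \<omega>) \<le> surplus u X Y I n \<omega>" by auto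
  have "0 \<le> u + (\<Sum>k\<in>{1..n}. X k \<omega> - Y k \<omega>)" using Suc.prems by auto
  then have s0: "0 \<le> surplus u X Y I n \<omega>" using ih by linarith
  have "surplus u X Y I n \<omega> \<le> surplus u X Y I n \<omega> * (1 + I (Suc n) \<omega>)"
    using s0 I[of "Suc n"] by (simp add: algebra_simps)
  then show ?case using ih by simp
qed

lemma surplus_ruin:
  assumes I: "\<And>k. k \<ge> 1 \<Longrightarrow> I k \<omega> \<ge> 0"
    and neg: "surplus u X Y I n \<omega> < 0"
  shows "\<exists>j. u < (\<Sum>k\<in>{1..j}. Y k \<omega> - X k \<omega>)"
proof (rule ccontr)
  assume nt: "\<not> (\<exists>j. u < (\<Sum>k\<in>{1..j}. Y k \<omega> - X k \<omega>))"
  have "\<forall>j. 0 \<le> u + (\<Sum>k\<in>{1..j}. X k \<omega> - Y k \<omega>)"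
  proof
    fix j
    from nt have "\<not> u < (\<Sum>k\<in>{1..j}. Y k \<omega> - X k \<omega>)" by blast
    then show "0 \<le> u + (\<Sum>k\<in>{1..j}. X k \<omega> - Y k \<omega>)" by (simp add: sum_subtractf)
  qed
  then have all: "\<forall>j\<le>n. 0 \<le> u + (\<Sum>k\<in>{1..j}. X k \<omega> - Y k \<omega>)" by blast
  have "u + (\<Sum>k\<in>{1..n}. X k \<omega> - Y k \<omega>) \<le> surplus u X Y I n \<omega>"
    using surplus_bound[of I \<omega> n u X Y] I all by blast
  moreover have "0 \<le> u + (\<Sum>k\<in>{1..n}. X k \<omega> - Y k \<omega>)" using all by blast
  ultimately show False using neg by linarith
qed

lemma sum_classes:
  fixes Z :: "nat \<Rightarrow> real" and p :: nat
  assumes p: "p > 0"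
  shows "(\<Sum>k\<in>{1..j}. Z k) = (\<Sum>r<p. \<Sum>i<(j + p - Suc r) div p. Z (Suc (r + i * p)))"
proof -
  define g where "g = (\<lambda>(r, i). Suc (r + i * p))"
  define S where "S = Sigma {..<p} (\<lambda>r. {..<(j + p - Suc r) div p})"
  have mem: "i < (j + p - Suc r) div p \<longleftrightarrow> Suc (r + i * p) \<le> j" if "r < p" for r i
  proof -
    have "i < (j + p - Suc r) div p \<longleftrightarrow> Suc i * p \<le> j + p - Suc r"
      using p by (metis less_eq_div_iff_mult_less_eq Suc_le_eq)
    also have "\<dots> \<longleftrightarrow> Suc (r + i * p) \<le> j" using that by auto
    finally show ?thesis .
  qed
  have inj: "inj_on g S"
  proof (rule inj_onI)
    fix x y assume "x \<in> S" "y \<in> S" "g x = g y"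
    then obtain r i r' i' where x: "x = (r, i)" "r < p" and y: "y = (r', i')" "r' < p"
      and e: "r + i * p = r' + i' * p" by (auto simp: S_def g_def)
    have "(r + i * p) mod p = r" "(r' + i' * p) mod p = r'" using x y by auto
    then have "r = r'" using e by simp
    then have "i = i'" using e p by simp
    then show "x = y" using x y \<open>r = r'\<close> by simp
  qed
  have img: "g ` S = {1..j}"
  proof
    show "g ` S \<subseteq> {1..j}" using mem by (auto simp: S_def g_def)
  next
    show "{1..j} \<subseteq> g ` S"
    proof
      fix k assume k: "k \<in> {1..j}"
      define r where "r = (k - 1) mod p"
      define i where "i = (k - 1) div p"
      have r: "r < p" using p by (simp add: r_def)
      have gk: "Suc (r + i * p) = k" using k by (simp add: r_def i_def)
      have "(r, i) \<in> S" using mem[OF r, of i] gk k r by (auto simp: S_def)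
      then show "k \<in> g ` S" using gk by (force simp: g_def)
    qed
  qed
  have "(\<Sum>r<p. \<Sum>i<(j + p - Suc r) div p. Z (Suc (r + i * p))) = (\<Sum>x\<in>S. Z (g x))"
    unfolding S_def g_def by (subst sum.Sigma) (auto simp: case_prod_unfold)
  also have "\<dots> = (\<Sum>k\<in>g ` S. Z k)" using inj by (simp add: sum.reindex)
  finally show ?thesis using img by simp
qed

lemma pigeon:
  fixes s :: "nat \<Rightarrow> real"
  assumes "p > 0" "u < (\<Sum>r<p. s r)"
  shows "\<exists>r<p. u / p < s r"
proof (rule ccontr)
  assume "\<not> ?thesis"
  then have "(\<Sum>r<p. s r) \<le> (\<Sum>r<p. u / p)" by (intro sum_mono) auto
  also have "\<dots> = u" using assms(1) by simp
  finally show False using assms(2) by simp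
qed


definition GXY :: "'a measure \<Rightarrow> (nat \<Rightarrow> 'a \<Rightarrow> real) \<Rightarrow> (nat \<Rightarrow> 'a \<Rightarrow> real) \<Rightarrow> nat set \<Rightarrow> 'a set set" where
  "GXY M X Y J = {a \<inter> b | a b. a \<in> gen_sigma M X J \<and> b \<in> gen_sigma M Y J}"

context prob_space begin

lemma gen_sigma_Int_closed:
  assumes "a \<in> gen_sigma M W J" "b \<in> gen_sigma M W J"
  shows "a \<inter> b \<in> gen_sigma M W J"
proof -
  interpret S: sigma_algebra "space M" "gen_sigma M W J"
    unfolding gen_sigma_def by (rule sigma_algebra_sigma_sets) auto
  show ?thesis using assms by (rule S.Int)
qed

lemma gen_sigma_space: "space M \<in> gen_sigma M W J"
  unfolding gen_sigma_def by (rule sigma_sets_top)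

lemma gen_sigma_mono: "J \<subseteq> K \<Longrightarrow> gen_sigma M W J \<subseteq> gen_sigma M W K"
  unfolding gen_sigma_def by (rule sigma_sets_subseteq) blast

lemma gen_sigma_basic: "i \<in> J \<Longrightarrow> S \<in> sets borel \<Longrightarrow> W i -` S \<inter> space M \<in> gen_sigma M W J"
  unfolding gen_sigma_def by (intro sigma_sets.Basic) blast

lemma gen_sigma_sub:
  assumes G: "G \<subseteq> Pow (space M)"
    and W: "\<And>i. i \<in> J \<Longrightarrow> W i \<in> borel_measurable (sigma (space M) G)"
  shows "gen_sigma M W J \<subseteq> sigma_sets (space M) G"
  unfolding gen_sigma_def
proof (rule sigma_sets_mono, safe)
  fix i and S :: "real set" assume "i \<in> J" "S \<in> sets borel"
  then have "W i -` S \<inter> space (sigma (space M) G) \<in> sets (sigma (space M) G)"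
    using W measurable_sets by blast
  then show "W i -` S \<inter> space M \<in> sigma_sets (space M) G"
    using G by (simp add: space_measure_of_conv sets_measure_of_conv)
qed

lemma indep_set_mono2:
  assumes "indep_set F G" "F' \<subseteq> F" "G' \<subseteq> G"
  shows "indep_set F' G'"
  using assms unfolding indep_sets2_eq by blast

lemma GXY_Pow: "GXY M X Y J \<subseteq> Pow (space M)"
  using gen_sigma_Pow unfolding GXY_def by blast

lemma GXY_meas:
  assumes "i \<in> J"
  shows "X i \<in> borel_measurable (sigma (space M) (GXY M X Y J))"
    and "Y i \<in> borel_measurable (sigma (space M) (GXY M X Y J))"
proof -
  show "X i \<in> borel_measurable (sigma (space M) (GXY M X Y J))"
  proof (rule meas_sub[OF GXY_Pow])
    fix S :: "real set" assume "S \<in> sets borel"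
    then have "(X i -` S \<inter> space M) \<inter> space M \<in> GXY M X Y J"
      unfolding GXY_def mem_Collect_eq
      by (intro exI[of _ "X i -` S \<inter> space M"] exI[of _ "space M"] conjI refl gen_sigma_basic[OF assms] gen_sigma_space)
    then show "X i -` S \<inter> space M \<in> sigma_sets (space M) (GXY M X Y J)"
      by (simp add: Int_absorb2 sigma_sets.Basic)
  qed
  show "Y i \<in> borel_measurable (sigma (space M) (GXY M X Y J))"
  proof (rule meas_sub[OF GXY_Pow])
    fix S :: "real set" assume "S \<in> sets borel"
    then have "space M \<inter> (Y i -` S \<inter> space M) \<in> GXY M X Y J"
      unfolding GXY_def mem_Collect_eq
      by (intro exI[of _ "space M"] exI[of _ "Y i -` S \<inter> space M"] conjI refl gen_sigma_basic[OF assms] gen_sigma_space)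
    then show "Y i -` S \<inter> space M \<in> sigma_sets (space M) (GXY M X Y J)"
      by (simp add: Int_absorb1 sigma_sets.Basic)
  qed
qed

lemma four_indep:
  assumes Xm: "\<And>i. i \<in> K \<Longrightarrow> X i \<in> borel_measurable M"
    and Ym: "\<And>i. i \<in> K \<Longrightarrow> Y i \<in> borel_measurable M"
    and J: "J1 \<subseteq> K" "J2 \<subseteq> K"
    and XY: "\<And>a b. a \<in> gen_sigma M X K \<Longrightarrow> b \<in> gen_sigma M Y K \<Longrightarrow> prob (a \<inter> b) = prob a * prob b"
    and iX: "indep_set (gen_sigma M X J1) (gen_sigma M X J2)"
    and iY: "indep_set (gen_sigma M Y J1) (gen_sigma M Y J2)"
  shows "indep_set (sigma_sets (space M) (GXY M X Y J1)) (sigma_sets (space M) (GXY M X Y J2))"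
proof (rule indep_set_sigma_sets)
  have XK: "gen_sigma M X K \<subseteq> events" by (rule gen_sigma_events) (use Xm in auto)
  have YK: "gen_sigma M Y K \<subseteq> events" by (rule gen_sigma_events) (use Ym in auto)
  have X1: "gen_sigma M X J1 \<subseteq> gen_sigma M X K" and X2: "gen_sigma M X J2 \<subseteq> gen_sigma M X K"
    using J by (auto intro: gen_sigma_mono[THEN subsetD])
  have Y1: "gen_sigma M Y J1 \<subseteq> gen_sigma M Y K" and Y2: "gen_sigma M Y J2 \<subseteq> gen_sigma M Y K"
    using J by (auto intro: gen_sigma_mono[THEN subsetD])
  have iX': "prob (a \<inter> b) = prob a * prob b" if "a \<in> gen_sigma M X J1" "b \<in> gen_sigma M X J2" for a b
    using iX that unfolding indep_sets2_eq by blast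
  have iY': "prob (a \<inter> b) = prob a * prob b" if "a \<in> gen_sigma M Y J1" "b \<in> gen_sigma M Y J2" for a b
    using iY that unfolding indep_sets2_eq by blast
  show "indep_set (GXY M X Y J1) (GXY M X Y J2)"
    unfolding indep_sets2_eq
  proof (intro conjI ballI)
    have ev: "a \<inter> b \<in> events" if "a \<in> gen_sigma M X K" "b \<in> gen_sigma M Y K" for a b
      using that XK YK by (intro sets.Int) auto
    show "GXY M X Y J1 \<subseteq> events" "GXY M X Y J2 \<subseteq> events"
      unfolding GXY_def using X1 X2 Y1 Y2 by (auto intro!: ev)
  next
    fix c d assume c: "c \<in> GXY M X Y J1" and d: "d \<in> GXY M X Y J2"
    then obtain a1 b1 a2 b2 where c': "c = a1 \<inter> b1" and d': "d = a2 \<inter> b2"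
      and a1: "a1 \<in> gen_sigma M X J1" and b1: "b1 \<in> gen_sigma M Y J1"
      and a2: "a2 \<in> gen_sigma M X J2" and b2: "b2 \<in> gen_sigma M Y J2"
      unfolding GXY_def by blast
    have "c \<inter> d = (a1 \<inter> a2) \<inter> (b1 \<inter> b2)" using c' d' by blast
    then have "prob (c \<inter> d) = prob (a1 \<inter> a2) * prob (b1 \<inter> b2)"
    proof -
      have a12: "a1 \<inter> a2 \<in> gen_sigma M X K"
        by (rule gen_sigma_Int_closed) (use a1 a2 X1 X2 in auto)
      have b12: "b1 \<inter> b2 \<in> gen_sigma M Y K"
        by (rule gen_sigma_Int_closed) (use b1 b2 Y1 Y2 in auto)
      show ?thesis using XY[OF a12 b12] \<open>c \<inter> d = (a1 \<inter> a2) \<inter> (b1 \<inter> b2)\<close> by simp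
    qed
    also have "\<dots> = (prob a1 * prob b1) * (prob a2 * prob b2)"
      using iX'[OF a1 a2] iY'[OF b1 b2] by simp
    also have "prob a1 * prob b1 = prob c" using XY[of a1 b1] subsetD[OF X1 a1] subsetD[OF Y1 b1] c' by simp
    also have "prob a2 * prob b2 = prob d" using XY[of a2 b2] subsetD[OF X2 a2] subsetD[OF Y2 b2] d' by simp
    finally show "prob (c \<inter> d) = prob c * prob d" .
  qed
  show "Int_stable (GXY M X Y J1)" "Int_stable (GXY M X Y J2)"
    unfolding Int_stable_def GXY_def
  proof safe
    fix a b a' b' assume "a \<in> gen_sigma M X J1" "b \<in> gen_sigma M Y J1" "a' \<in> gen_sigma M X J1" "b' \<in> gen_sigma M Y J1"
    then show "\<exists>a'' b''. a \<inter> b \<inter> (a' \<inter> b') = a'' \<inter> b'' \<and> a'' \<in> gen_sigma M X J1 \<and> b'' \<in> gen_sigma M Y J1"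
      by (intro exI[of _ "a \<inter> a'"] exI[of _ "b \<inter> b'"]) (simp add: gen_sigma_Int_closed Int_ac)
  next
    fix a b a' b' assume "a \<in> gen_sigma M X J2" "b \<in> gen_sigma M Y J2" "a' \<in> gen_sigma M X J2" "b' \<in> gen_sigma M Y J2"
    then show "\<exists>a'' b''. a \<inter> b \<inter> (a' \<inter> b') = a'' \<inter> b'' \<and> a'' \<in> gen_sigma M X J2 \<and> b'' \<in> gen_sigma M Y J2"
      by (intro exI[of _ "a \<inter> a'"] exI[of _ "b \<inter> b'"]) (simp add: gen_sigma_Int_closed Int_ac)
  qed
qed


end


context prob_space begin

lemma nn_indep_split:
  fixes X Y :: "'a \<Rightarrow> real"
  assumes ind: "indep_var borel X borel Y"
  shows "(\<integral>\<^sup>+\<omega>. ennreal (exp (R * (Y \<omega> - X \<omega>))) \<partial>M)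
       = (\<integral>\<^sup>+x. ennreal (exp (- R * x)) \<partial>distr M borel X) * (\<integral>\<^sup>+y. ennreal (exp (R * y)) \<partial>distr M borel Y)"
proof -
  have rv: "X \<in> borel_measurable M" "Y \<in> borel_measurable M"
    using ind by (auto simp: indep_var_eq)
  have "(\<integral>\<^sup>+\<omega>. ennreal (exp (R * (Y \<omega> - X \<omega>))) \<partial>M)
      = (\<integral>\<^sup>+\<omega>. ennreal (exp (- R * X \<omega>)) * ennreal (exp (R * Y \<omega>)) \<partial>M)"
    by (rule nn_integral_cong) (simp add: ennreal_mult''[symmetric] exp_add[symmetric] algebra_simps)
  also have "\<dots> = (\<integral>\<^sup>+\<omega>. ennreal (exp (- R * X \<omega>)) \<partial>M) * (\<integral>\<^sup>+\<omega>. ennreal (exp (R * Y \<omega>)) \<partial>M)"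
    by (rule indep_var_nn_prod[OF ind, of "\<lambda>x. ennreal (exp (- R * x))" "\<lambda>y. ennreal (exp (R * y))"]) auto
  also have "\<dots> = (\<integral>\<^sup>+x. ennreal (exp (- R * x)) \<partial>distr M borel X) * (\<integral>\<^sup>+y. ennreal (exp (R * y)) \<partial>distr M borel Y)"
    using rv by (simp add: nn_integral_distr)
  finally show ?thesis .
qed

lemma main:
  fixes m :: nat and X Y I :: "nat \<Rightarrow> 'a \<Rightarrow> real" and R u :: real
  assumes meas: "\<And>n. n \<ge> 1 \<Longrightarrow> X n \<in> borel_measurable M \<and> Y n \<in> borel_measurable M \<and> I n \<in> borel_measurable M"
    and nonneg: "\<And>n \<omega>. n \<ge> 1 \<Longrightarrow> \<omega> \<in> space M \<Longrightarrow> X n \<omega> \<ge> 0 \<and> Y n \<omega> \<ge> 0 \<and> I n \<omega> \<ge> 0"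
    and idX: "\<And>n. n \<ge> 1 \<Longrightarrow> distr M borel (X n) = distr M borel (X 1)"
    and idY: "\<And>n. n \<ge> 1 \<Longrightarrow> distr M borel (Y n) = distr M borel (Y 1)"
    and mdepX: "m_dependent m X"
    and mdepY: "m_dependent m Y"
    and mutual: "indep_sets
       (\<lambda>j::nat. if j = 0 then gen_sigma M X {1..} else if j = 1 then gen_sigma M Y {1..} else gen_sigma M I {1..})
       {0, 1, 2}"
    and R_pos: "R > 0"
    and lund: "(\<integral>\<^sup>+ \<omega>. ennreal (exp (R * (Y 1 \<omega> - X 1 \<omega>))) \<partial>M) \<le> 1"
  shows "ruin_prob X Y I u \<le> real (m + 1) * exp (- R * u / real (m + 1))"
proof -
  define p where "p = m + 1"
  have p0: "p > 0" by (simp add: p_def)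
  have Xm: "\<And>i. i \<in> {1..} \<Longrightarrow> X i \<in> borel_measurable M" and Ym: "\<And>i. i \<in> {1..} \<Longrightarrow> Y i \<in> borel_measurable M"
    using meas by auto
  have XY: "prob (a \<inter> b) = prob a * prob b" if "a \<in> gen_sigma M X {1..}" "b \<in> gen_sigma M Y {1..}" for a b
    using indep_setsD[OF mutual, of "{0,1}" "\<lambda>j. if j = 0 then a else b"] that by (simp add: Int_commute)
  have XYind: "indep_set (gen_sigma M X {1..}) (gen_sigma M Y {1..})"
    unfolding indep_sets2_eq
  proof (intro conjI ballI)
    show "gen_sigma M X {1..} \<subseteq> events" by (rule gen_sigma_events[OF Xm])
    show "gen_sigma M Y {1..} \<subseteq> events" by (rule gen_sigma_events[OF Ym])
  qed (rule XY)
  have indk: "indep_var borel (X k) borel (Y k)" if "k \<ge> 1" for k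
  proof (rule indep_var_from_sets[where F="gen_sigma M X {1..}" and G = "gen_sigma M Y {1..}"])
    show "indep_set (sigma_sets (space M) (gen_sigma M X {1..})) (sigma_sets (space M) (gen_sigma M Y {1..}))"
      using XYind by (simp add: gen_sigma_idem)
  qed (use that meas in \<open>auto simp: gen_sigma_Pow intro!: gen_sigma_meas\<close>)
  have lundk: "(\<integral>\<^sup>+\<omega>. ennreal (exp (R * (Y k \<omega> - X k \<omega>))) \<partial>M) \<le> 1" if "k \<ge> 1" for k
    using lund nn_indep_split[OF indk[OF that], of R] nn_indep_split[OF indk[of 1], of R] idX[OF that] idY[OF that]
    by simp
  define W where "W r i \<omega> = Y (Suc (r + i * p)) \<omega> - X (Suc (r + i * p)) \<omega>" for r i \<omega>
  have Wm[measurable]: "W r i \<in> borel_measurable M" for r i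
    unfolding W_def using meas[of "Suc (r + i * p)"] by auto
  have Wind: "indep_set (gen_sigma M (W r) {..<k}) (gen_sigma M (W r) {k})" if r: "r < p" for r k
  proof (cases k)
    case 0
    have eq: "gen_sigma M (W r) {..<k} = {{}, space M}"
      using 0 by (simp add: gen_sigma_def sigma_sets_empty_eq)
    have ev: "gen_sigma M (W r) {k} \<subseteq> events" by (rule gen_sigma_events) auto
    show ?thesis
      unfolding indep_sets2_eq eq
    proof (intro conjI ballI)
      show "{{}, space M} \<subseteq> events" by auto
      show "gen_sigma M (W r) {k} \<subseteq> events" by (rule ev)
    next
      fix a b assume a: "a \<in> {{}, space M}" and b: "b \<in> gen_sigma M (W r) {k}"
      then have "b \<in> events" using ev by blast
      then have "space M \<inter> b = b" by (rule sets.Int_space_eq1)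
      then show "prob (a \<inter> b) = prob a * prob b" using a prob_space by auto
    qed
  next
    case (Suc k')
    define n where "n = Suc (r + k' * p)"
    have n1: "n \<ge> 1" by (simp add: n_def)
    have iX: "indep_set (gen_sigma M X {1..n}) (gen_sigma M X {n + (m+1)..})"
    proof -
      have "\<forall>k\<ge>m+1. indep_set (gen_sigma M X {1..n}) (gen_sigma M X {n+k..})"
        using mdepX n1 unfolding m_dependent_def by blast
      then show ?thesis by (metis order_refl)
    qed
    have iY: "indep_set (gen_sigma M Y {1..n}) (gen_sigma M Y {n + (m+1)..})"
    proof -
      have "\<forall>k\<ge>m+1. indep_set (gen_sigma M Y {1..n}) (gen_sigma M Y {n+k..})"
        using mdepY n1 unfolding m_dependent_def by blast
      then show ?thesis by (metis order_refl)
    qed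
    have four: "indep_set (sigma_sets (space M) (GXY M X Y {1..n})) (sigma_sets (space M) (GXY M X Y {n + (m+1)..}))"
      by (rule four_indep[OF Xm Ym _ _ XY iX iY]) (auto simp: n_def)
    show ?thesis
    proof (rule indep_set_mono2[OF four])
      show "gen_sigma M (W r) {..<k} \<subseteq> sigma_sets (space M) (GXY M X Y {1..n})"
      proof (rule gen_sigma_sub[OF GXY_Pow])
        fix i assume "i \<in> {..<k}"
        then have "i \<le> k'" using Suc by auto
        then have "i * p \<le> k' * p" by simp
        then have idx: "Suc (r + i * p) \<in> {1..n}" by (simp add: n_def)
        have [measurable]: "X (Suc (r + i * p)) \<in> borel_measurable (sigma (space M) (GXY M X Y {1..n}))"
          "Y (Suc (r + i * p)) \<in> borel_measurable (sigma (space M) (GXY M X Y {1..n}))"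
          using GXY_meas[OF idx] by auto
        show "W r i \<in> borel_measurable (sigma (space M) (GXY M X Y {1..n}))"
          unfolding W_def by measurable
      qed
      show "gen_sigma M (W r) {k} \<subseteq> sigma_sets (space M) (GXY M X Y {n + (m+1)..})"
      proof (rule gen_sigma_sub[OF GXY_Pow])
        fix i assume "i \<in> {k}"
        then have idx: "Suc (r + i * p) \<in> {n + (m+1)..}" using Suc by (simp add: n_def p_def)
        have [measurable]: "X (Suc (r + i * p)) \<in> borel_measurable (sigma (space M) (GXY M X Y {n + (m+1)..}))"
          "Y (Suc (r + i * p)) \<in> borel_measurable (sigma (space M) (GXY M X Y {n + (m+1)..}))"
          using GXY_meas[OF idx] by auto
        show "W r i \<in> borel_measurable (sigma (space M) (GXY M X Y {n + (m+1)..}))"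
          unfolding W_def by measurable
      qed
    qed
  qed
  have lundW: "(\<integral>\<^sup>+\<omega>. ennreal (exp (R * W r i \<omega>)) \<partial>M) \<le> 1" for r i
    unfolding W_def using lundk[of "Suc (r + i * p)"] by simp
  define E where "E r = {\<omega>\<in>space M. \<exists>J. u / p < (\<Sum>i<J. W r i \<omega>)}" for r
  have Em: "E r \<in> events" for r
  proof -
    have "E r = (\<Union>J. {\<omega>\<in>space M. u / p < (\<Sum>i<J. W r i \<omega>)})" by (auto simp: E_def)
    also have "\<dots> \<in> events" by measurable
    finally show ?thesis .
  qed
  have Eb: "prob (E r) \<le> exp (- R * (u / p))" if "r < p" for r
    unfolding E_def
    by (rule maximal[OF Wm Wind[OF that] lundW]) (use R_pos in auto)
  have sub: "(\<Union>n\<in>{1..}. {\<omega> \<in> space M. surplus u X Y I n \<omega> < 0}) \<subseteq> (\<Union>r<p. E r)"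
  proof (rule subsetI)
    fix \<omega> assume "\<omega> \<in> (\<Union>n\<in>{1..}. {\<omega> \<in> space M. surplus u X Y I n \<omega> < 0})"
    then obtain n where \<omega>: "\<omega> \<in> space M" and neg: "surplus u X Y I n \<omega> < 0" by blast
    have "\<And>k. k \<ge> 1 \<Longrightarrow> I k \<omega> \<ge> 0" using nonneg \<omega> by auto
    from surplus_ruin[OF this neg] obtain j where j: "u < (\<Sum>k\<in>{1..j}. Y k \<omega> - X k \<omega>)" by blast
    also have "(\<Sum>k\<in>{1..j}. Y k \<omega> - X k \<omega>) = (\<Sum>r<p. \<Sum>i<(j + p - Suc r) div p. W r i \<omega>)"
      unfolding W_def by (rule sum_classes[OF p0])
    finally obtain r where r: "r < p" and "u / p < (\<Sum>i<(j + p - Suc r) div p. W r i \<omega>)"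
      using pigeon[OF p0] by blast
    then have "\<omega> \<in> E r" using \<omega> by (auto simp: E_def)
    then show "\<omega> \<in> (\<Union>r<p. E r)" using r by blast
  qed
  have "ruin_prob X Y I u \<le> prob (\<Union>r<p. E r)"
    unfolding ruin_prob_def using Em by (intro finite_measure_mono[OF sub]) auto
  also have "\<dots> \<le> (\<Sum>r<p. prob (E r))"
    by (rule measure_UNION_le) (use Em in auto)
  also have "\<dots> \<le> (\<Sum>r<p. exp (- R * (u / p)))"
    by (rule sum_mono) (use Eb in auto)
  also have "\<dots> = real (m + 1) * exp (- R * u / real (m + 1))"
    by (simp add: p_def)
  finally show ?thesis .
qed

end

theorem theorem3p4:
  fixes M :: "'a measure" and m :: nat and X Y I :: "nat \<Rightarrow> 'a \<Rightarrow> real" and R :: real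
  assumes "prob_space M"
    and meas: "\<And>n. n \<ge> 1 \<Longrightarrow> X n \<in> borel_measurable M \<and> Y n \<in> borel_measurable M \<and> I n \<in> borel_measurable M"
    and nonneg: "\<And>n \<omega>. n \<ge> 1 \<Longrightarrow> \<omega> \<in> space M \<Longrightarrow> X n \<omega> \<ge> 0 \<and> Y n \<omega> \<ge> 0 \<and> I n \<omega> \<ge> 0"
    and integ: "\<And>n. n \<ge> 1 \<Longrightarrow> integrable M (X n) \<and> integrable M (Y n) \<and> integrable M (I n)"
    and idX: "\<And>n. n \<ge> 1 \<Longrightarrow> distr M borel (X n) = distr M borel (X 1)"
    and idY: "\<And>n. n \<ge> 1 \<Longrightarrow> distr M borel (Y n) = distr M borel (Y 1)"
    and idI: "\<And>n. n \<ge> 1 \<Longrightarrow> distr M borel (I n) = distr M borel (I 1)"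
    and mdepX: "prob_space.m_dependent M m X"
    and mdepY: "prob_space.m_dependent M m Y"
    and indI: "prob_space.indep_vars M (\<lambda>_. borel) I {1..}"
    and mutual: "prob_space.indep_sets M
       (\<lambda>j::nat. if j = 0 then gen_sigma M X {1..} else if j = 1 then gen_sigma M Y {1..} else gen_sigma M I {1..})
       {0, 1, 2}"
    and R_pos: "R > 0"
    and lund: "(\<integral>\<^sup>+ \<omega>. ennreal (exp (R * (Y 1 \<omega> - X 1 \<omega>))) \<partial>M) \<le> 1"
  shows "\<forall>u::real. u > real (m + 1) * ln (real (m + 1)) / R \<longrightarrow>
           prob_space.ruin_prob M X Y I u \<le> real (m + 1) * exp (- R * u / real (m + 1))"
proof -
  interpret prob_space M by (rule assms(1))
  show ?thesis
    using main[OF meas nonneg idX idY mdepX mdepY mutual R_pos lund] by blast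
qed

end
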